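(* Let $M\subset\mathbb{R}^{2d}$ satisfy the standing assumptions below, let $\overline M$ be its symmetrization, $N=(\overline M)^*$ its symplectic polar, and let $H$ be the positively homogeneous function of degree one whose unit level set is $N$. Then for every $x$ in the exterior of $\overline M$, $$V(x):=2(n_+(x)-n_-(x))=-2X_H(x).$$ In particular, $V$ is homogeneous of degree zero.
   Context: Equip $\mathbb{R}^{2d}$ with the standard inner product, complex structure $J$ ($J^2=-I$, orthogonal) and symplectic form $\omega(u,v)=\langle Ju,v\rangle$; the Hamiltonian vector field of $f$ is defined by $\omega(\cdot,X_f)=df$. Standing assumptions: $M$ is a smooth closed hypersurface bounding a strictly convex domain containing the origin in its interior, and is a level set of a smooth function with positive definite Hessian. For such a hypersurface $Q$ and $q\in Q$, the Reeb vector $R_Q(q)$ is the unique vector with $\omega(v,R_Q(q))=0$ for all $v\in T_qQ$ and $\omega(q,R_Q(q))=1$; the symplectic polar is $Q^*=\{R_Q(q):q\in Q\}$. Write $a\sim b$ if $a=\lambda b$ with $\lambda>0$. For $x$ in the exterior of $M$, $n_+(x)$ and $n_-(x)$ denote the unique points of $M$ with $R_M(n_+(x))\sim x$ and $R_M(n_-(x))\sim -x$. The symmetrization $\overline M$ is the hypersurface whose support function is $\bar p(v)=p(v)+p(-v)$, where $p$ is the support function of $M$ (equivalently the boundary of the Minkowski sum of the domain bounded by $M$ and its reflection in the origin). *)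

theory Defs
  imports "HOL-Analysis.Analysis"
begin

definition omega :: "('a::euclidean_space \<Rightarrow> 'a) \<Rightarrow> 'a \<Rightarrow> 'a \<Rightarrow> real" where
  "omega J u v = (J u) \<bullet> v"

definition complex_structure :: "('a::euclidean_space \<Rightarrow> 'a) \<Rightarrow> bool" where
  "complex_structure J \<longleftrightarrow> linear J \<and> (\<forall>u. J (J u) = - u) \<and> (\<forall>u v. J u \<bullet> J v = u \<bullet> v)"

primrec Ck :: "nat \<Rightarrow> ('a::real_normed_vector \<Rightarrow> real) \<Rightarrow> bool" where
  "Ck 0 f = continuous_on UNIV f"
| "Ck (Suc k) f = ((\<forall>x. f differentiable (at x)) \<and>
                    (\<forall>v. Ck k (\<lambda>x. frechet_derivative f (at x) v)))"

definition smooth_fun :: "('a::real_normed_vector \<Rightarrow> real) \<Rightarrow> bool" where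
  "smooth_fun f \<longleftrightarrow> (\<forall>k. Ck k f)"

definition pos_def_hessian :: "('a::real_normed_vector \<Rightarrow> real) \<Rightarrow> bool" where
  "pos_def_hessian f \<longleftrightarrow> (\<forall>x v. v \<noteq> 0 \<longrightarrow>
     frechet_derivative (\<lambda>y. frechet_derivative f (at y) v) (at x) v > 0)"

definition tangent_space :: "'a::euclidean_space set \<Rightarrow> 'a \<Rightarrow> 'a set" where
  "tangent_space Q q = {v. \<exists>\<gamma> e. e > 0 \<and> \<gamma> 0 = q \<and> (\<forall>t. \<bar>t\<bar> < e \<longrightarrow> \<gamma> t \<in> Q) \<and>
                              (\<gamma> has_vector_derivative v) (at 0)}"

definition reeb :: "('a::euclidean_space \<Rightarrow> 'a) \<Rightarrow> 'a set \<Rightarrow> 'a \<Rightarrow> 'a" where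
  "reeb J Q q = (THE R. (\<forall>v \<in> tangent_space Q q. omega J v R = 0) \<and> omega J q R = 1)"

definition symp_polar :: "('a::euclidean_space \<Rightarrow> 'a) \<Rightarrow> 'a set \<Rightarrow> 'a set" where
  "symp_polar J Q = reeb J Q ` Q"

definition pos_sim :: "'a::real_vector \<Rightarrow> 'a \<Rightarrow> bool" where
  "pos_sim a b \<longleftrightarrow> (\<exists>l>0. a = l *\<^sub>R b)"

definition n_plus :: "('a::euclidean_space \<Rightarrow> 'a) \<Rightarrow> 'a set \<Rightarrow> 'a \<Rightarrow> 'a" where
  "n_plus J M x = (THE q. q \<in> M \<and> pos_sim (reeb J M q) x)"

definition n_minus :: "('a::euclidean_space \<Rightarrow> 'a) \<Rightarrow> 'a set \<Rightarrow> 'a \<Rightarrow> 'a" where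
  "n_minus J M x = (THE q. q \<in> M \<and> pos_sim (reeb J M q) (- x))"

text \<open>Symmetrization: boundary of the Minkowski sum of K and -K, where K is the
  domain bounded by M (K = convex hull of M).\<close>
definition symmetrization :: "'a::euclidean_space set \<Rightarrow> 'a set" where
  "symmetrization M = frontier {a - b | a b. a \<in> convex hull M \<and> b \<in> convex hull M}"

definition exterior :: "'a::euclidean_space set \<Rightarrow> 'a set" where
  "exterior Q = - convex hull Q"

definition ham_field :: "('a::euclidean_space \<Rightarrow> 'a) \<Rightarrow> ('a \<Rightarrow> real) \<Rightarrow> 'a \<Rightarrow> 'a" where
  "ham_field J f x = (THE X. \<forall>u. omega J u X = frechet_derivative f (at x) u)"

end

theory Submission
  imports Defs
begin



lemma J_props:
  assumes "complex_structure J"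
  shows "linear J" "\<And>u. J (J u) = - u" "\<And>u v. J u \<bullet> J v = u \<bullet> v"
    "\<And>u v. J u \<bullet> v = - (u \<bullet> J v)"
proof -
  have A: "linear J" "\<And>u. J (J u) = - u" "\<And>u v. J u \<bullet> J v = u \<bullet> v"
    using assms unfolding complex_structure_def by auto
  show "linear J" "\<And>u. J (J u) = - u" "\<And>u v. J u \<bullet> J v = u \<bullet> v" using A by auto
  fix u v
  have "J u \<bullet> v = J (J u) \<bullet> J v" using A(3)[of "J u" v] by simp
  also have "\<dots> = - (u \<bullet> J v)" using A(2)[of u] by simp
  finally show "J u \<bullet> v = - (u \<bullet> J v)" .
qed

lemma reeb_eq:
  assumes J: "complex_structure J"
    and T: "tangent_space Q q = {v. v \<bullet> w = 0}"
    and w: "w \<noteq> 0" and qw: "q \<bullet> w \<noteq> 0"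
  shows "reeb J Q q = (1 / (q \<bullet> w)) *\<^sub>R J w"
proof -
  note JP = J_props[OF J]
  let ?R = "(1 / (q \<bullet> w)) *\<^sub>R J w"
  have lin: "linear J" by (rule JP(1))
  have P1: "\<forall>v \<in> tangent_space Q q. omega J v ?R = 0"
    using T by (simp add: omega_def JP(3) inner_commute)
  have P2: "omega J q ?R = 1" using qw by (simp add: omega_def JP(3))
  have U: "R' = ?R" if h1: "\<forall>v \<in> tangent_space Q q. omega J v R' = 0"
      and h2: "omega J q R' = 1" for R'
  proof -
    define u where "u = J R'"
    have ortho: "v \<bullet> u = 0" if "v \<bullet> w = 0" for v
    proof -
      have "omega J v R' = 0" using h1 T that by auto
      then have "J v \<bullet> R' = 0" by (simp add: omega_def)
      then show ?thesis unfolding u_def using JP(4)[of v R'] by simp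
    qed
    define a where "a = (u \<bullet> w) / (w \<bullet> w)"
    have ww: "w \<bullet> w \<noteq> 0" using w by simp
    define v where "v = u - a *\<^sub>R w"
    have "v \<bullet> w = 0" unfolding v_def a_def using ww by (simp add: inner_diff_left)
    then have "v \<bullet> u = 0" by (rule ortho)
    then have "v \<bullet> v = 0" using \<open>v \<bullet> w = 0\<close> unfolding v_def
      by (simp add: inner_diff_left inner_diff_right inner_commute)
    then have "v = 0" by simp
    then have uw: "u = a *\<^sub>R w" unfolding v_def by simp
    have R'eq: "R' = - (a *\<^sub>R J w)"
    proof -
      have "J u = - R'" unfolding u_def using JP(2) by simp
      moreover have "J u = a *\<^sub>R J w" using uw linear_scale[OF lin] by simp
      ultimately show ?thesis by simp
    qed
    have "J q \<bullet> R' = 1" using h2 by (simp add: omega_def)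
    then have "- a * (q \<bullet> w) = 1" using R'eq by (simp add: JP(3))
    then have "- a = 1 / (q \<bullet> w)" using qw by (simp add: field_simps)
    then have "a = - (1 / (q \<bullet> w))" by simp
    then show ?thesis unfolding R'eq by simp
  qed
  show ?thesis unfolding reeb_def
  proof (rule the_equality)
    show "(\<forall>v\<in>tangent_space Q q. omega J v ?R = 0) \<and> omega J q ?R = 1" using P1 P2 by blast
    show "\<And>R'. (\<forall>v\<in>tangent_space Q q. omega J v R' = 0) \<and> omega J q R' = 1 \<Longrightarrow> R' = ?R"
      using U by blast
  qed
qed

lemma vd_inner:
  assumes "(\<gamma> has_vector_derivative v) F"
  shows "((\<lambda>t. \<gamma> t \<bullet> w) has_real_derivative (v \<bullet> w)) F"
proof -
  have 1: "((\<lambda>t. \<gamma> t \<bullet> w) has_derivative (\<lambda>x. (x *\<^sub>R v) \<bullet> w)) F"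
    using assms unfolding has_vector_derivative_def by (rule has_derivative_inner_left)
  have 2: "(\<lambda>x. (x *\<^sub>R v) \<bullet> w) = (*) (v \<bullet> w)" by (auto simp: fun_eq_iff)
  show ?thesis unfolding has_field_derivative_def using 1 unfolding 2 .
qed

lemma tangent_fermat:
  assumes "Q \<subseteq> C" and sup: "\<forall>z\<in>C. z \<bullet> w \<le> q \<bullet> w"
  shows "tangent_space Q q \<subseteq> {v. v \<bullet> w = 0}"
proof
  fix v assume "v \<in> tangent_space Q q"
  then obtain \<gamma> e where e: "e > 0" "\<gamma> 0 = q" "\<forall>t. \<bar>t\<bar> < e \<longrightarrow> \<gamma> t \<in> Q"
      "(\<gamma> has_vector_derivative v) (at 0)"
    unfolding tangent_space_def by blast
  have "((\<lambda>t. \<gamma> t \<bullet> w) has_real_derivative (v \<bullet> w)) (at 0)"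
    using e(4) by (rule vd_inner)
  moreover have "\<forall>y. \<bar>0 - y\<bar> < e \<longrightarrow> \<gamma> y \<bullet> w \<le> \<gamma> 0 \<bullet> w"
    using e(2,3) sup assms(1) by auto
  ultimately have "v \<bullet> w = 0" using DERIV_local_max e(1) by blast
  then show "v \<in> {v. v \<bullet> w = 0}" by simp
qed




definition rho :: "'a::euclidean_space set \<Rightarrow> 'a \<Rightarrow> real" where
  "rho C y = (if y = 0 then 0 else inverse (THE d. 0 < d \<and> d *\<^sub>R y \<in> frontier C))"

lemma shrink_interior:
  fixes C :: "'a::euclidean_space set"
  assumes "convex C" "0 \<in> interior C" "x \<in> C" "0 \<le> s" "s < 1"
  shows "s *\<^sub>R x \<in> interior C"
proof -
  have "x - (1 - s) *\<^sub>R (x - 0) \<in> interior C"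
    by (rule mem_interior_convex_shrink) (use assms in auto)
  moreover have "x - (1 - s) *\<^sub>R (x - 0) = s *\<^sub>R x" by (simp add: algebra_simps)
  ultimately show ?thesis by simp
qed

lemma ray_beyond:
  fixes C :: "'a::euclidean_space set"
  assumes "convex C" "0 \<in> interior C" "d *\<^sub>R y \<in> frontier C" "0 < d" "d < e"
  shows "e *\<^sub>R y \<notin> C"
proof
  assume "e *\<^sub>R y \<in> C"
  then have "(d / e) *\<^sub>R (e *\<^sub>R y) \<in> interior C"
    by (intro shrink_interior) (use assms in auto)
  then have "d *\<^sub>R y \<in> interior C" using assms by simp
  then show False using assms(3) by (simp add: frontier_def)
qed

lemma ray_unique:
  fixes C :: "'a::euclidean_space set"
  assumes "convex C" "closed C" "0 \<in> interior C"
    "d1 *\<^sub>R y \<in> frontier C" "0 < d1" "d2 *\<^sub>R y \<in> frontier C" "0 < d2"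
  shows "d1 = d2"
proof -
  have fC: "frontier C \<subseteq> C" using assms(2) by (simp add: frontier_subset_closed)
  have "\<not> d1 < d2" using ray_beyond[OF assms(1,3,4,5)] assms(6) fC by auto
  moreover have "\<not> d2 < d1" using ray_beyond[OF assms(1,3,6,7)] assms(4) fC by auto
  ultimately show ?thesis by linarith
qed

lemma rho_ray:
  fixes C :: "'a::euclidean_space set"
  assumes "convex C" "compact C" "0 \<in> interior C" "y \<noteq> 0"
  shows "0 < rho C y" "(1 / rho C y) *\<^sub>R y \<in> frontier C"
proof -
  obtain d where d: "0 < d" "(0 + d *\<^sub>R y) \<in> frontier C"
    using ray_to_frontier[of C 0 y] assms compact_imp_bounded by blast
  have cl: "closed C" using assms(2) compact_imp_closed by blast
  have T: "(THE d. 0 < d \<and> d *\<^sub>R y \<in> frontier C) = d"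
    apply (rule the_equality) using d ray_unique[OF assms(1) cl assms(3)] by auto
  show "0 < rho C y" "(1 / rho C y) *\<^sub>R y \<in> frontier C"
    unfolding rho_def using assms(4) T d by (auto simp: divide_inverse)
qed

lemma rho_frontier:
  fixes C :: "'a::euclidean_space set"
  assumes "convex C" "compact C" "0 \<in> interior C" "y \<in> frontier C"
  shows "rho C y = 1"
proof -
  have y0: "y \<noteq> 0" using assms(3,4) by (auto simp: frontier_def)
  have cl: "closed C" using assms(2) compact_imp_closed by blast
  note R = rho_ray[OF assms(1,2,3) y0]
  have "1 / rho C y = 1"
    using ray_unique[OF assms(1) cl assms(3) R(2) _ _ zero_less_one] R(1) assms(4) by simp
  then show ?thesis by simp
qed

lemma rho_le:
  fixes C :: "'a::euclidean_space set"
  assumes "convex C" "compact C" "0 \<in> interior C" "0 < s" "(1 / s) *\<^sub>R y \<in> C"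
  shows "rho C y \<le> s"
proof (cases "y = 0")
  case True then show ?thesis using assms by (simp add: rho_def)
next
  case False
  note R = rho_ray[OF assms(1,2,3) False]
  show ?thesis
  proof (rule ccontr)
    assume "\<not> rho C y \<le> s"
    then have "1 / rho C y < 1 / s" using assms(4) R(1) by (simp add: frac_less2)
    then show False using ray_beyond[OF assms(1,3) R(2)] R(1) assms(5) by simp
  qed
qed

lemma rho_lower:
  fixes C :: "'a::euclidean_space set"
  assumes "convex C" "compact C" "0 \<in> interior C" "y \<noteq> 0" "\<forall>z\<in>C. z \<bullet> w \<le> m"
  shows "y \<bullet> w \<le> rho C y * m"
proof -
  note R = rho_ray[OF assms(1,2,3,4)]
  have "frontier C \<subseteq> C" using assms(2) compact_imp_closed frontier_subset_closed by blast
  then have "((1 / rho C y) *\<^sub>R y) \<bullet> w \<le> m" using R(2) assms(5) by blast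
  then have "(y \<bullet> w) / rho C y \<le> m" by simp
  then show ?thesis using R(1) by (simp add: divide_le_eq mult.commute)
qed

lemma gauge_curve:
  fixes C :: "'a::euclidean_space set"
  assumes "convex C" "compact C" "0 \<in> interior C" "q \<in> frontier C"
    and b0: "\<beta> 0 = q" and bd: "(\<beta> has_vector_derivative v) (at 0)"
    and rd: "((\<lambda>t. rho C (\<beta> t)) has_real_derivative 0) (at 0)"
  shows "v \<in> tangent_space (frontier C) q"
proof -
  have q0: "q \<noteq> 0" using assms(3,4) by (auto simp: frontier_def)
  have "isCont \<beta> 0" using bd by (rule has_vector_derivative_continuous)
  then obtain e where e: "e > 0" "\<forall>t. dist t 0 < e \<longrightarrow> dist (\<beta> t) (\<beta> 0) < norm q"
    using q0 unfolding continuous_at_eps_delta by (meson zero_less_norm_iff)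
  have bnz: "\<beta> t \<noteq> 0" if "\<bar>t\<bar> < e" for t
    using e(2)[rule_format, of t] that b0 by auto
  define \<gamma> where "\<gamma> t = inverse (rho C (\<beta> t)) *\<^sub>R \<beta> t" for t
  have rq: "rho C q = 1" by (rule rho_frontier) (use assms in auto)
  have g0: "\<gamma> 0 = q" unfolding \<gamma>_def b0 rq by simp
  have gin: "\<gamma> t \<in> frontier C" if "\<bar>t\<bar> < e" for t
    using rho_ray(2)[OF assms(1,2,3) bnz[OF that]] unfolding \<gamma>_def by (simp add: divide_inverse)
  have "((\<lambda>t. inverse (rho C (\<beta> t))) has_real_derivative (- (0 * inverse (rho C (\<beta> 0) ^ Suc (Suc 0))))) (at 0)"
    by (rule DERIV_inverse_fun[OF rd]) (simp add: b0 rq)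
  then have "((\<lambda>t. inverse (rho C (\<beta> t))) has_real_derivative 0) (at 0)" by simp
  from has_vector_derivative_scaleR[OF this bd]
  have "(\<gamma> has_vector_derivative v) (at 0)" unfolding \<gamma>_def b0 rq by simp
  then show ?thesis unfolding tangent_space_def using e(1) g0 gin by blast
qed




lemma line_deriv:
  assumes "(f has_derivative f') (at (x + t *\<^sub>R v))"
  shows "((\<lambda>s. f (x + s *\<^sub>R v)) has_real_derivative f' v) (at t)"
proof -
  have lin: "linear f'" using assms has_derivative_bounded_linear bounded_linear.linear by blast
  have inner: "((\<lambda>s. x + s *\<^sub>R v) has_derivative (\<lambda>s. s *\<^sub>R v)) (at t)"
    by (auto intro!: derivative_eq_intros)
  have "((\<lambda>s. f (x + s *\<^sub>R v)) has_derivative (\<lambda>s. f' (s *\<^sub>R v))) (at t)"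
    using has_derivative_compose[OF inner assms] by simp
  moreover have "(\<lambda>s. f' (s *\<^sub>R v)) = (*) (f' v)"
    using linear_scale[OF lin] by (auto simp: fun_eq_iff)
  ultimately show ?thesis unfolding has_field_derivative_def by simp
qed

lemma linear_grad:
  fixes L :: "'a::euclidean_space \<Rightarrow> real"
  assumes "linear L"
  shows "L u = (\<Sum>b\<in>Basis. L b *\<^sub>R b) \<bullet> u"
proof -
  have "L u = L (\<Sum>b\<in>Basis. (u \<bullet> b) *\<^sub>R b)" by (simp add: euclidean_representation)
  also have "\<dots> = (\<Sum>b\<in>Basis. L ((u \<bullet> b) *\<^sub>R b))"
    by (rule linear_sum[OF assms])
  also have "\<dots> = (\<Sum>b\<in>Basis. (u \<bullet> b) * L b)"
    by (simp add: linear_scale[OF assms])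
  also have "\<dots> = (\<Sum>b\<in>Basis. L b * (b \<bullet> u))"
    by (rule sum.cong) (auto simp: inner_commute)
  also have "\<dots> = (\<Sum>b\<in>Basis. L b *\<^sub>R b) \<bullet> u"
    by (simp add: inner_sum_left)
  finally show ?thesis .
qed

locale setting =
  fixes J :: "'a::euclidean_space \<Rightarrow> 'a" and K M :: "'a set" and F :: "'a \<Rightarrow> real" and c :: real
  assumes J: "complex_structure J"
    and K_compact: "compact K" and K_convex: "convex K" and K_int: "0 \<in> interior K"
    and M_bd: "frontier K = M"
    and F_smooth: "smooth_fun F" and F_hess: "pos_def_hessian F"
    and M_level: "M = {y. F y = c}"
begin

definition DF where "DF x = frechet_derivative F (at x)"
definition grad where "grad x = (\<Sum>b\<in>Basis. DF x b *\<^sub>R b)"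

lemma Ck2: "Ck (Suc (Suc 0)) F" using F_smooth unfolding smooth_fun_def by blast

lemma F_der: "(F has_derivative DF x) (at x)"
  using Ck2 unfolding DF_def by (simp add: frechet_derivative_works[symmetric])

lemma DF_linear: "linear (DF x)"
  using F_der has_derivative_bounded_linear bounded_linear.linear by blast

lemma DF_grad: "DF x u = grad x \<bullet> u"
  unfolding grad_def by (rule linear_grad[OF DF_linear])

lemma DF2_der: "((\<lambda>z. DF z v) has_derivative frechet_derivative (\<lambda>z. DF z v) (at x)) (at x)"
  using Ck2 unfolding DF_def by (simp add: frechet_derivative_works[symmetric])

lemma DF_cont: "continuous_on UNIV (\<lambda>z. DF z v)"
proof -
  have "\<forall>x. (\<lambda>z. DF z v) differentiable at x" using Ck2 by (simp add: DF_def)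
  then show ?thesis
    by (meson differentiable_at_imp_differentiable_on differentiable_imp_continuous_on)
qed

lemma grad_cont: "continuous_on UNIV grad"
  unfolding grad_def by (intro continuous_intros DF_cont)

lemma strict_grad_ineq:
  assumes "x \<noteq> y"
  shows "F y > F x + DF x (y - x)"
proof -
  define v where "v = y - x"
  have v0: "v \<noteq> 0" using assms unfolding v_def by simp
  define \<psi> where "\<psi> t = DF (x + t *\<^sub>R v) v" for t
  have d1: "((\<lambda>t. F (x + t *\<^sub>R v)) has_real_derivative \<psi> t) (at t)" for t
    unfolding \<psi>_def by (rule line_deriv[OF F_der])
  have d2: "(\<psi> has_real_derivative frechet_derivative (\<lambda>z. DF z v) (at (x + t *\<^sub>R v)) v) (at t)" for t
    unfolding \<psi>_def by (rule line_deriv[OF DF2_der])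
  have pos: "frechet_derivative (\<lambda>z. DF z v) (at z) v > 0" for z
    using F_hess v0 unfolding pos_def_hessian_def DF_def by blast
  obtain z where z: "0 < z" "z < 1" "F (x + 1 *\<^sub>R v) - F (x + 0 *\<^sub>R v) = (1 - 0) * \<psi> z"
    using MVT2[of 0 1 "\<lambda>t. F (x + t *\<^sub>R v)" \<psi>] d1 by auto
  have "\<psi> 0 < \<psi> z"
    by (rule DERIV_pos_imp_increasing[OF z(1)]) (use d2 pos in blast)
  then show ?thesis using z(3) unfolding v_def \<psi>_def by simp
qed

lemma grad_ineq: "F y \<ge> F x + DF x (y - x)"
  using strict_grad_ineq[of x y] by (cases "x = y") (auto simp: linear_0[OF DF_linear])

lemma F_convex: "convex_on UNIV F"
proof (rule convex_onI)
  fix t :: real and x y :: 'a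
  assume t: "0 < t" "t < 1"
  define z where "z = (1 - t) *\<^sub>R x + t *\<^sub>R y"
  have 1: "F x \<ge> F z + DF z (x - z)" by (rule grad_ineq)
  have 2: "F y \<ge> F z + DF z (y - z)" by (rule grad_ineq)
  have "(1 - t) * DF z (x - z) + t * DF z (y - z) = DF z ((1 - t) *\<^sub>R (x - z) + t *\<^sub>R (y - z))"
    using DF_linear[of z] by (simp add: linear_add linear_scale)
  also have "(1 - t) *\<^sub>R (x - z) + t *\<^sub>R (y - z) = 0"
    unfolding z_def by (simp add: algebra_simps)
  finally have "(1 - t) * DF z (x - z) + t * DF z (y - z) = 0"
    using linear_0[OF DF_linear] by simp
  moreover have "(1 - t) * F x \<ge> (1 - t) * (F z + DF z (x - z))"
    using 1 t by (intro mult_left_mono) auto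
  moreover have "t * F y \<ge> t * (F z + DF z (y - z))"
    using 2 t by (intro mult_left_mono) auto
  ultimately show "F ((1 - t) *\<^sub>R x + t *\<^sub>R y) \<le> (1 - t) * F x + t * F y"
    unfolding z_def[symmetric] by (simp add: algebra_simps)
qed simp

end



lemma vd_compose:
  assumes "(h has_vector_derivative h') (at t)" "(f has_derivative f') (at (h t))"
  shows "((\<lambda>s. f (h s)) has_real_derivative f' h') (at t)"
proof -
  have lin: "linear f'" using assms(2) has_derivative_bounded_linear bounded_linear.linear by blast
  have inner: "(h has_derivative (\<lambda>s. s *\<^sub>R h')) (at t)"
    using assms(1) unfolding has_vector_derivative_def .
  have "((\<lambda>s. f (h s)) has_derivative (\<lambda>s. f' (s *\<^sub>R h'))) (at t)"
    using has_derivative_compose[OF inner assms(2)] by simp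
  moreover have "(\<lambda>s. f' (s *\<^sub>R h')) = (*) (f' h')"
    using linear_scale[OF lin] by (auto simp: fun_eq_iff)
  ultimately show ?thesis unfolding has_field_derivative_def by simp
qed

lemma hull_frontier:
  fixes C :: "'a::euclidean_space set"
  assumes "compact C" "convex C"
  shows "convex hull (frontier C) = C"
proof
  have cl: "closed C" using assms(1) compact_imp_closed by blast
  show "convex hull (frontier C) \<subseteq> C"
    by (rule hull_minimal) (use assms(2) cl frontier_subset_closed in auto)
  show "C \<subseteq> convex hull (frontier C)"
  proof
    fix y assume yC: "y \<in> C"
    show "y \<in> convex hull (frontier C)"
    proof (cases "y \<in> frontier C")
      case True then show ?thesis by (simp add: hull_inc)
    next
      case False
      then have yi: "y \<in> interior C" using yC cl by (simp add: frontier_def closure_closed)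
      obtain l :: 'a where l: "l \<noteq> 0" using nonzero_Basis by blast
      have bd: "bounded C" using assms(1) compact_imp_bounded by blast
      obtain d1 where d1: "0 < d1" "y + d1 *\<^sub>R l \<in> frontier C"
        using ray_to_frontier[OF bd yi l] by blast
      obtain d2 where d2: "0 < d2" "y + d2 *\<^sub>R (- l) \<in> frontier C"
        using ray_to_frontier[OF bd yi, of "- l"] l by auto
      define u where "u = d2 / (d1 + d2)"
      have u: "0 \<le> u" "u \<le> 1" using d1 d2 unfolding u_def by auto
      have "(1 - u) *\<^sub>R (y + d2 *\<^sub>R (- l)) + u *\<^sub>R (y + d1 *\<^sub>R l) \<in> convex hull (frontier C)"
        by (rule convexD_alt[OF convex_convex_hull]) (use d1 d2 u hull_inc in auto)
      moreover have "(1 - u) *\<^sub>R (y + d2 *\<^sub>R (- l)) + u *\<^sub>R (y + d1 *\<^sub>R l) = y"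
      proof -
        have "1 - u = d1 / (d1 + d2)" unfolding u_def using d1 d2 by (simp add: field_simps)
        then have "(1 - u) *\<^sub>R (y + d2 *\<^sub>R (- l)) + u *\<^sub>R (y + d1 *\<^sub>R l)
            = y + ((u * d1) - (1 - u) * d2) *\<^sub>R l"
          by (simp add: algebra_simps)
        also have "(u * d1) - (1 - u) * d2 = 0"
          unfolding u_def using d1 d2 by (simp add: field_simps)
        finally show ?thesis by simp
      qed
      ultimately show ?thesis by simp
    qed
  qed
qed

context setting begin

lemma K_closed: "closed K" using K_compact compact_imp_closed by blast

lemma M_sub_K: "M \<subseteq> K" using M_bd K_closed frontier_subset_closed by blast

lemma hull_M: "convex hull M = K"
  using hull_frontier[OF K_compact K_convex] M_bd by simp

lemma F_le_K: "y \<in> K \<Longrightarrow> F y \<le> c"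
  using convex_on_convex_hull_bound[of M F c] convex_on_subset[OF F_convex] hull_M M_level by auto

lemma F0: "F 0 < c"
proof -
  have "F 0 \<le> c" using F_le_K K_int interior_subset by blast
  moreover have "F 0 \<noteq> c"
  proof
    assume "F 0 = c"
    then have "0 \<in> frontier K" using M_bd M_level by auto
    then show False using K_int by (simp add: frontier_def)
  qed
  ultimately show ?thesis by simp
qed

lemma K_eq: "K = {y. F y \<le> c}"
proof
  show "K \<subseteq> {y. F y \<le> c}" using F_le_K by auto
  show "{y. F y \<le> c} \<subseteq> K"
  proof (rule ccontr)
    assume "\<not> {y. F y \<le> c} \<subseteq> K"
    then obtain y where y: "F y \<le> c" "y \<notin> K" by auto
    have y0: "y \<noteq> 0" using y(2) K_int interior_subset by blast
    obtain d where d: "0 < d" "0 + d *\<^sub>R y \<in> frontier K"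
        "\<And>e. 0 \<le> e \<Longrightarrow> e < d \<Longrightarrow> 0 + e *\<^sub>R y \<in> interior K"
      using ray_to_frontier[OF compact_imp_bounded[OF K_compact] K_int y0] by blast
    have "\<not> 1 < d" using d(3)[of 1] y(2) interior_subset by auto
    moreover have "d \<noteq> 1" using d(2) y(2) M_bd M_sub_K by auto
    ultimately have d1: "d < 1" by simp
    have "F (d *\<^sub>R y) = c" using d(2) M_bd M_level by auto
    moreover have "F ((1 - d) *\<^sub>R 0 + d *\<^sub>R y) \<le> (1 - d) * F 0 + d * F y"
      using convex_onD[OF F_convex, of d 0 y] d d1 by simp
    moreover have "(1 - d) * F 0 < (1 - d) * c" using F0 d1 by simp
    moreover have "d * F y \<le> d * c" using y(1) d(1) by simp
    ultimately show False by (simp add: algebra_simps)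
  qed
qed

lemma grad_support: "q \<in> M \<Longrightarrow> z \<in> K \<Longrightarrow> z \<bullet> grad q \<le> q \<bullet> grad q"
proof -
  assume q: "q \<in> M" and z: "z \<in> K"
  have "F z \<ge> F q + DF q (z - q)" by (rule grad_ineq)
  moreover have "F q = c" using q M_level by simp
  moreover have "F z \<le> c" using F_le_K z by simp
  ultimately have "DF q (z - q) \<le> 0" by simp
  then have "(z - q) \<bullet> grad q \<le> 0" by (simp add: DF_grad inner_commute)
  then show ?thesis by (simp add: inner_diff_left)
qed

lemma grad_pos: "q \<in> M \<Longrightarrow> q \<bullet> grad q > 0"
proof -
  assume q: "q \<in> M"
  have "F 0 \<ge> F q + DF q (0 - q)" by (rule grad_ineq)
  moreover have "F q = c" using q M_level by simp
  ultimately have "grad q \<bullet> q \<ge> c - F 0" by (simp add: DF_grad)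
  then show ?thesis using F0 by (simp add: inner_commute)
qed

lemma grad_nz: "q \<in> M \<Longrightarrow> grad q \<noteq> 0" using grad_pos by fastforce

lemma tangent_M:
  assumes q: "q \<in> M"
  shows "tangent_space M q = {v. v \<bullet> grad q = 0}"
proof
  show "tangent_space M q \<subseteq> {v. v \<bullet> grad q = 0}"
    by (rule tangent_fermat[OF M_sub_K]) (use grad_support q in blast)
  show "{v. v \<bullet> grad q = 0} \<subseteq> tangent_space M q"
  proof
    fix v assume "v \<in> {v. v \<bullet> grad q = 0}"
    then have vg: "v \<bullet> grad q = 0" by simp
    define g where "g = grad q"
    have qg: "q \<bullet> g > 0" using grad_pos q g_def by simp
    have Fq: "F q = c" using q M_level by simp
    have qf: "q \<in> frontier K" using q M_bd by simp
    have rq: "rho K q = 1" by (rule rho_frontier[OF K_convex K_compact K_int qf])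
    have low: "1 \<le> rho K (q + t *\<^sub>R v)" for t
    proof -
      have e: "(q + t *\<^sub>R v) \<bullet> g = q \<bullet> g" using vg g_def by (simp add: inner_add_left)
      then have nz: "q + t *\<^sub>R v \<noteq> 0" using qg by auto
      have "(q + t *\<^sub>R v) \<bullet> g \<le> rho K (q + t *\<^sub>R v) * (q \<bullet> g)"
        by (rule rho_lower[OF K_convex K_compact K_int nz]) (use grad_support q g_def in blast)
      then show ?thesis using e qg by simp
    qed
    have phi: "((\<lambda>t. F ((1 / (1 + a * t)) *\<^sub>R (q + t *\<^sub>R v))) has_real_derivative (- a * (q \<bullet> g))) (at 0)" for a
    proof -
      have i1: "((\<lambda>t. inverse (1 + a * t)) has_real_derivative (- (a * inverse ((1 + a * 0) ^ Suc (Suc 0))))) (at 0)"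
        by (rule DERIV_inverse_fun) (auto intro!: derivative_eq_intros)
      have i2: "((\<lambda>t. q + t *\<^sub>R v) has_vector_derivative v) (at 0)"
        by (auto intro!: derivative_eq_intros)
      have "((\<lambda>t. inverse (1 + a * t) *\<^sub>R (q + t *\<^sub>R v)) has_vector_derivative (v - a *\<^sub>R q)) (at 0)"
        using has_vector_derivative_scaleR[OF i1 i2] by simp
      then have h: "((\<lambda>t. (1 / (1 + a * t)) *\<^sub>R (q + t *\<^sub>R v)) has_vector_derivative (v - a *\<^sub>R q)) (at 0)"
        by (simp add: divide_inverse)
      have "((\<lambda>t. F ((1 / (1 + a * t)) *\<^sub>R (q + t *\<^sub>R v))) has_real_derivative DF q (v - a *\<^sub>R q)) (at 0)"
        by (rule vd_compose[OF h]) (simp add: F_der)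
      moreover have "DF q (v - a *\<^sub>R q) = - a * (q \<bullet> g)"
        using vg by (simp add: DF_grad g_def inner_diff_right inner_commute)
      ultimately show ?thesis by simp
    qed
    have up: "\<exists>\<delta>>0. \<forall>t. t \<noteq> 0 \<and> \<bar>t\<bar> < \<delta> \<longrightarrow> rho K (q + t *\<^sub>R v) \<le> 1 + \<epsilon> * \<bar>t\<bar>"
      if \<epsilon>: "\<epsilon> > 0" for \<epsilon>
    proof -
      obtain d1 where d1: "d1 > 0" "\<forall>h>0. h < d1 \<longrightarrow>
          F ((1 / (1 + \<epsilon> * 0)) *\<^sub>R (q + 0 *\<^sub>R v)) > F ((1 / (1 + \<epsilon> * (0 + h))) *\<^sub>R (q + (0 + h) *\<^sub>R v))"
        using DERIV_neg_dec_right[OF phi[of \<epsilon>]] \<epsilon> qg by auto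
      obtain d2 where d2: "d2 > 0" "\<forall>h>0. h < d2 \<longrightarrow>
          F ((1 / (1 + (- \<epsilon>) * (0 - h))) *\<^sub>R (q + (0 - h) *\<^sub>R v)) < F ((1 / (1 + (- \<epsilon>) * 0)) *\<^sub>R (q + 0 *\<^sub>R v))"
        using DERIV_pos_inc_left[OF phi[of "- \<epsilon>"]] \<epsilon> qg by auto
      show ?thesis
      proof (intro exI[of _ "min d1 d2"] conjI allI impI)
        show "0 < min d1 d2" using d1 d2 by simp
        fix t assume t: "t \<noteq> 0 \<and> \<bar>t\<bar> < min d1 d2"
        show "rho K (q + t *\<^sub>R v) \<le> 1 + \<epsilon> * \<bar>t\<bar>"
        proof (cases "t > 0")
          case True
          have "F ((1 / (1 + \<epsilon> * t)) *\<^sub>R (q + t *\<^sub>R v)) < c"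
            using d1(2)[rule_format, of t] True t Fq by simp
          then have "(1 / (1 + \<epsilon> * t)) *\<^sub>R (q + t *\<^sub>R v) \<in> K" using K_eq by auto
          then have "rho K (q + t *\<^sub>R v) \<le> 1 + \<epsilon> * t"
            using mult_pos_pos[OF \<epsilon> True] by (intro rho_le[OF K_convex K_compact K_int]) auto
          then show ?thesis using True by simp
        next
          case False
          then have tn: "t < 0" using t by simp
          have "F ((1 / (1 + \<epsilon> * (- t))) *\<^sub>R (q + t *\<^sub>R v)) < c"
            using d2(2)[rule_format, of "- t"] tn t Fq by simp
          then have "(1 / (1 + \<epsilon> * (- t))) *\<^sub>R (q + t *\<^sub>R v) \<in> K" using K_eq by auto
          then have "rho K (q + t *\<^sub>R v) \<le> 1 + \<epsilon> * (- t)"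
            using mult_pos_pos[OF \<epsilon>, of "- t"] tn by (intro rho_le[OF K_convex K_compact K_int]) auto
          then show ?thesis using tn by simp
        qed
      qed
    qed
    have rd: "((\<lambda>t. rho K (q + t *\<^sub>R v)) has_real_derivative 0) (at 0)"
      unfolding has_field_derivative_iff
    proof (rule tendstoI)
      fix e :: real assume e: "e > 0"
      obtain \<delta> where \<delta>: "\<delta> > 0" "\<forall>t. t \<noteq> 0 \<and> \<bar>t\<bar> < \<delta> \<longrightarrow> rho K (q + t *\<^sub>R v) \<le> 1 + (e / 2) * \<bar>t\<bar>"
        using up[of "e / 2"] e by auto
      show "\<forall>\<^sub>F t in at 0. dist ((rho K (q + t *\<^sub>R v) - rho K (q + 0 *\<^sub>R v)) / (t - 0)) 0 < e"
        unfolding eventually_at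
      proof (intro exI[of _ \<delta>] conjI ballI impI)
        show "\<delta> > 0" by (rule \<delta>(1))
        fix t :: real assume "t \<in> UNIV" and t: "t \<noteq> 0 \<and> dist t 0 < \<delta>"
        have a: "rho K (q + t *\<^sub>R v) \<le> 1 + (e / 2) * \<bar>t\<bar>" using \<delta>(2) t by simp
        have b: "1 \<le> rho K (q + t *\<^sub>R v)" by (rule low)
        have "\<bar>rho K (q + t *\<^sub>R v) - 1\<bar> \<le> (e / 2) * \<bar>t\<bar>" using a b by simp
        then have "\<bar>rho K (q + t *\<^sub>R v) - 1\<bar> / \<bar>t\<bar> \<le> e / 2"
          using t by (simp add: divide_le_eq)
        then have "\<bar>rho K (q + t *\<^sub>R v) - 1\<bar> / \<bar>t\<bar> < e" using e by linarith
        then show "dist ((rho K (q + t *\<^sub>R v) - rho K (q + 0 *\<^sub>R v)) / (t - 0)) 0 < e"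
          using rq by (simp add: dist_real_def abs_divide)
      qed
    qed
    have bd: "((\<lambda>t. q + t *\<^sub>R v) has_vector_derivative v) (at 0)"
      by (auto intro!: derivative_eq_intros)
    have "v \<in> tangent_space (frontier K) q"
      by (rule gauge_curve[OF K_convex K_compact K_int qf _ bd rd]) simp
    then show "v \<in> tangent_space M q" using M_bd by simp
  qed
qed

end



lemma pos_dir:
  fixes C :: "'a::euclidean_space set"
  assumes "0 \<in> interior C" "u \<noteq> 0"
  shows "\<exists>z\<in>C. z \<bullet> u > 0"
proof -
  obtain e where e: "e > 0" "ball 0 e \<subseteq> C" using assms(1) mem_interior by blast
  define z where "z = (e / 2 / norm u) *\<^sub>R u"
  have "norm z = e / 2" unfolding z_def using assms(2) e by simp
  then have "z \<in> C" using e by auto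
  moreover have "z \<bullet> u = e / 2 * norm u"
    unfolding z_def using assms(2) by (simp add: power2_norm_eq_inner[symmetric] power2_eq_square)
  moreover have "e / 2 * norm u > 0" using e assms(2) by simp
  ultimately show ?thesis by (intro bexI[of _ z]) auto
qed

lemma max_frontier:
  fixes C :: "'a::euclidean_space set"
  assumes "closed C" "q \<in> C" "u \<noteq> 0" "\<forall>z\<in>C. z \<bullet> u \<le> q \<bullet> u"
  shows "q \<in> frontier C"
proof (rule ccontr)
  assume "q \<notin> frontier C"
  then have "q \<in> interior C" using assms(1,2) by (simp add: frontier_def closure_closed)
  then obtain e where e: "e > 0" "ball q e \<subseteq> C" using mem_interior by blast
  define z where "z = q + (e / 2 / norm u) *\<^sub>R u"
  have "dist q z = e / 2" unfolding z_def dist_norm using assms(3) e by simp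
  then have "z \<in> C" using e by auto
  moreover have "z \<bullet> u = q \<bullet> u + e / 2 * norm u"
    unfolding z_def using assms(3)
    by (simp add: inner_add_left power2_norm_eq_inner[symmetric] power2_eq_square)
  moreover have "e / 2 * norm u > 0" using e assms(3) by simp
  ultimately show False using assms(4) by fastforce
qed

context setting begin

definition maxK where "maxK u q \<longleftrightarrow> q \<in> K \<and> (\<forall>z\<in>K. z \<bullet> u \<le> q \<bullet> u)"

lemma maxK_M: "u \<noteq> 0 \<Longrightarrow> maxK u q \<Longrightarrow> q \<in> M"
  using max_frontier[OF K_closed] M_bd unfolding maxK_def by blast

lemma maxK_pos: "u \<noteq> 0 \<Longrightarrow> maxK u q \<Longrightarrow> q \<bullet> u > 0"
  using pos_dir[OF K_int] unfolding maxK_def by fastforce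

lemma normal_par:
  assumes q: "q \<in> M" and u: "u \<noteq> 0" and sup: "\<forall>z\<in>K. z \<bullet> u \<le> q \<bullet> u"
  shows "\<exists>\<alpha>>0. u = \<alpha> *\<^sub>R grad q"
proof -
  define g where "g = grad q"
  have T: "tangent_space M q = {v. v \<bullet> g = 0}" using tangent_M[OF q] g_def by simp
  have T2: "tangent_space M q \<subseteq> {v. v \<bullet> u = 0}"
    by (rule tangent_fermat[OF M_sub_K sup])
  have g0: "g \<noteq> 0" using grad_nz q g_def by simp
  have gg: "g \<bullet> g \<noteq> 0" using g0 by simp
  define a where "a = (u \<bullet> g) / (g \<bullet> g)"
  define v where "v = u - a *\<^sub>R g"
  have vg: "v \<bullet> g = 0" unfolding v_def a_def using gg by (simp add: inner_diff_left)
  then have vu: "v \<bullet> u = 0" using T T2 by blast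
  have "v \<bullet> v = v \<bullet> u - a * (v \<bullet> g)" unfolding v_def by (simp add: inner_diff_right)
  then have "v \<bullet> v = 0" using vg vu by simp
  then have ua: "u = a *\<^sub>R g" unfolding v_def by simp
  have "q \<bullet> u > 0" using maxK_pos[OF u] q M_sub_K sup unfolding maxK_def by blast
  moreover have "q \<bullet> g > 0" using grad_pos q g_def by simp
  moreover have "q \<bullet> u = a * (q \<bullet> g)" using ua by simp
  ultimately have "a > 0" using zero_less_mult_pos2 by metis
  then show ?thesis using ua g_def by blast
qed

lemma maxK_iff:
  assumes q: "q \<in> M" and u: "u \<noteq> 0"
  shows "maxK u q \<longleftrightarrow> (\<exists>\<alpha>>0. u = \<alpha> *\<^sub>R grad q)"
proof
  assume "maxK u q"
  then show "\<exists>\<alpha>>0. u = \<alpha> *\<^sub>R grad q" using normal_par[OF q u] unfolding maxK_def by blast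
next
  assume "\<exists>\<alpha>>0. u = \<alpha> *\<^sub>R grad q"
  then obtain \<alpha> where a: "\<alpha> > 0" "u = \<alpha> *\<^sub>R grad q" by blast
  have "z \<bullet> u \<le> q \<bullet> u" if "z \<in> K" for z
    using grad_support[OF q that] a by (simp add: mult_left_mono)
  then show "maxK u q" unfolding maxK_def using q M_sub_K by blast
qed

lemma max_exists: "\<exists>q. maxK u q"
proof -
  have "K \<noteq> {}" using K_int interior_subset by blast
  moreover have "continuous_on K (\<lambda>z. z \<bullet> u)" by (intro continuous_intros)
  ultimately obtain q where "q \<in> K" "\<forall>z\<in>K. z \<bullet> u \<le> q \<bullet> u"
    using continuous_attains_sup[OF K_compact] by blast
  then show ?thesis unfolding maxK_def by blast
qed

lemma max_unique:
  assumes u: "u \<noteq> 0" and 1: "maxK u q1" and 2: "maxK u q2"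
  shows "q1 = q2"
proof (rule ccontr)
  assume ne: "q1 \<noteq> q2"
  have q1: "q1 \<in> M" and q2: "q2 \<in> M" using maxK_M[OF u] 1 2 by auto
  obtain \<alpha> where a: "\<alpha> > 0" "u = \<alpha> *\<^sub>R grad q1" using maxK_iff[OF q1 u] 1 by blast
  have "F q2 > F q1 + DF q1 (q2 - q1)" by (rule strict_grad_ineq[OF ne])
  moreover have "F q1 = c" "F q2 = c" using q1 q2 M_level by auto
  ultimately have "grad q1 \<bullet> (q2 - q1) < 0" by (simp add: DF_grad)
  then have "u \<bullet> (q2 - q1) < 0" using a by (simp add: mult_pos_neg)
  moreover have "q2 \<bullet> u = q1 \<bullet> u" using 1 2 unfolding maxK_def by (meson order_antisym)
  ultimately show False by (simp add: inner_diff_right inner_commute)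
qed

definition mx where "mx u = (THE q. maxK u q)"

lemma mx_max: "u \<noteq> 0 \<Longrightarrow> maxK u (mx u)"
  unfolding mx_def using max_exists max_unique by (metis theI)

lemma mx_eq: "u \<noteq> 0 \<Longrightarrow> maxK u q \<Longrightarrow> mx u = q"
  using mx_max max_unique by blast

lemma mx_M: "u \<noteq> 0 \<Longrightarrow> mx u \<in> M"
  using mx_max maxK_M by blast

lemma reeb_M:
  assumes q: "q \<in> M"
  shows "reeb J M q = (1 / (q \<bullet> grad q)) *\<^sub>R J (grad q)"
  by (rule reeb_eq[OF J tangent_M[OF q] grad_nz[OF q]]) (use grad_pos[OF q] in simp)

lemma J_lin: "linear J" using J_props[OF J] by blast
lemma J_J: "J (J u) = - u" using J_props[OF J] by blast
lemma J_scale: "J (a *\<^sub>R u) = a *\<^sub>R J u" using linear_scale[OF J_lin] by blast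
lemma J_neg: "J (- u) = - J u" using linear_neg[OF J_lin] by blast
lemma J_nz: "u \<noteq> 0 \<Longrightarrow> J u \<noteq> 0"
  using J_J linear_0[OF J_lin] by (metis neg_equal_0_iff_equal)

lemma pos_sim_iff:
  assumes x: "x \<noteq> 0" and q: "q \<in> M"
  shows "pos_sim (reeb J M q) x \<longleftrightarrow> maxK (- J x) q"
proof -
  define g where "g = grad q"
  have qg: "q \<bullet> g > 0" using grad_pos q g_def by simp
  have R: "reeb J M q = (1 / (q \<bullet> g)) *\<^sub>R J g" using reeb_M q g_def by simp
  have Jx: "- J x \<noteq> 0" using J_nz x by simp
  show ?thesis
  proof
    assume "pos_sim (reeb J M q) x"
    then obtain l where l: "l > 0" "(1 / (q \<bullet> g)) *\<^sub>R J g = l *\<^sub>R x" unfolding pos_sim_def R by blast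
    have "J ((1 / (q \<bullet> g)) *\<^sub>R J g) = J (l *\<^sub>R x)" using l by simp
    then have e1: "l *\<^sub>R J x = - ((1 / (q \<bullet> g)) *\<^sub>R g)" by (simp add: J_scale J_J)
    have "J x = (1 / l) *\<^sub>R (l *\<^sub>R J x)" using l(1) by simp
    also have "\<dots> = - ((1 / l) *\<^sub>R (1 / (q \<bullet> g)) *\<^sub>R g)" unfolding e1 by simp
    finally have "- J x = (1 / (l * (q \<bullet> g))) *\<^sub>R g" by simp
    moreover have "1 / (l * (q \<bullet> g)) > 0" using l(1) qg by simp
    ultimately show "maxK (- J x) q" using maxK_iff[OF q Jx] g_def by blast
  next
    assume "maxK (- J x) q"
    then obtain \<alpha> where a: "\<alpha> > 0" "- J x = \<alpha> *\<^sub>R g" using maxK_iff[OF q Jx] g_def by blast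
    have "J (- J x) = \<alpha> *\<^sub>R J g" using a by (simp add: J_scale)
    then have xe: "x = \<alpha> *\<^sub>R J g" by (simp add: J_neg J_J)
    have "(1 / (q \<bullet> g)) *\<^sub>R J g = (1 / (\<alpha> * (q \<bullet> g))) *\<^sub>R x"
      using a(1) unfolding xe by simp
    moreover have "1 / (\<alpha> * (q \<bullet> g)) > 0" using a(1) qg by simp
    ultimately show "pos_sim (reeb J M q) x" unfolding pos_sim_def R by blast
  qed
qed

lemma n_plus_eq:
  assumes x: "x \<noteq> 0"
  shows "n_plus J M x = mx (- J x)"
proof -
  have Jx: "- J x \<noteq> 0" using J_nz x by simp
  show ?thesis unfolding n_plus_def
  proof (rule the_equality)
    show "mx (- J x) \<in> M \<and> pos_sim (reeb J M (mx (- J x))) x"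
      using mx_M[OF Jx] pos_sim_iff[OF x] mx_max[OF Jx] by blast
    show "\<And>q. q \<in> M \<and> pos_sim (reeb J M q) x \<Longrightarrow> q = mx (- J x)"
      using pos_sim_iff[OF x] mx_eq[OF Jx] by metis
  qed
qed

lemma n_minus_eq:
  assumes x: "x \<noteq> 0"
  shows "n_minus J M x = mx (J x)"
proof -
  have "n_minus J M x = n_plus J M (- x)" unfolding n_minus_def n_plus_def by simp
  also have "\<dots> = mx (- J (- x))" using n_plus_eq x by simp
  finally show ?thesis by (simp add: J_neg)
qed

end



context setting begin

definition D where "D = {a - b | a b. a \<in> K \<and> b \<in> K}"

lemma D_compact: "compact D" unfolding D_def by (rule compact_differences[OF K_compact K_compact])

lemma D_convex: "convex D"
proof -
  have "D = (\<Union>x\<in> K. \<Union>y \<in> K. {x - y})" unfolding D_def by auto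
  then show ?thesis using convex_differences[OF K_convex K_convex] by simp
qed

lemma D_closed: "closed D" using D_compact compact_imp_closed by blast

lemma K_sub_D: "K \<subseteq> D"
proof
  fix a assume "a \<in> K"
  moreover have "(0::'a) \<in> K" using K_int interior_subset by blast
  ultimately show "a \<in> D" unfolding D_def by force
qed

lemma D_int: "0 \<in> interior D" using K_int interior_mono[OF K_sub_D] by blast

definition zD where "zD w = mx w - mx (- w)"

lemma zD_max:
  assumes w: "w \<noteq> 0"
  shows "zD w \<in> D" "\<And>z. z \<in> D \<Longrightarrow> z \<bullet> w \<le> zD w \<bullet> w"
proof -
  have w': "- w \<noteq> 0" using w by simp
  note A = mx_max[OF w, unfolded maxK_def] and B = mx_max[OF w', unfolded maxK_def]
  show "zD w \<in> D" unfolding zD_def D_def using A B by blast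
  fix z assume "z \<in> D"
  then obtain a b where ab: "z = a - b" "a \<in> K" "b \<in> K" unfolding D_def by blast
  have "a \<bullet> w \<le> mx w \<bullet> w" using A ab by blast
  moreover have "b \<bullet> (- w) \<le> mx (- w) \<bullet> (- w)" using B ab by blast
  ultimately show "z \<bullet> w \<le> zD w \<bullet> w" unfolding zD_def ab by (simp add: inner_diff_left)
qed

lemma zD_frontier: "w \<noteq> 0 \<Longrightarrow> zD w \<in> frontier D"
  using max_frontier[OF D_closed] zD_max by blast

lemma zD_pos: "w \<noteq> 0 \<Longrightarrow> zD w \<bullet> w > 0"
  using pos_dir[OF D_int] zD_max by fastforce

lemma tangent_D:
  assumes w: "w \<noteq> 0"
  shows "tangent_space (frontier D) (zD w) = {v. v \<bullet> w = 0}"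
proof
  have fD: "frontier D \<subseteq> D" using D_closed frontier_subset_closed by blast
  show "tangent_space (frontier D) (zD w) \<subseteq> {v. v \<bullet> w = 0}"
    by (rule tangent_fermat[OF fD]) (use zD_max[OF w] in blast)
  show "{v. v \<bullet> w = 0} \<subseteq> tangent_space (frontier D) (zD w)"
  proof
    fix v assume "v \<in> {v. v \<bullet> w = 0}"
    then have vw: "v \<bullet> w = 0" by simp
    define a where "a = mx w"
    define b where "b = mx (- w)"
    define q where "q = zD w"
    have qab: "q = a - b" unfolding q_def zD_def a_def b_def by simp
    have aM: "a \<in> M" using mx_M[OF w] a_def by simp
    obtain \<alpha> where al: "\<alpha> > 0" "w = \<alpha> *\<^sub>R grad a"
      using maxK_iff[OF aM w] mx_max[OF w] a_def by blast
    have "v \<bullet> grad a = 0" using vw al by simp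
    then have "v \<in> tangent_space M a" using tangent_M[OF aM] by simp
    then obtain \<gamma> e where ge: "e > 0" "\<gamma> 0 = a" "\<forall>t. \<bar>t\<bar> < e \<longrightarrow> \<gamma> t \<in> M"
        "(\<gamma> has_vector_derivative v) (at 0)"
      unfolding tangent_space_def by blast
    have bK: "b \<in> K" using mx_max[of "- w"] w b_def unfolding maxK_def by simp
    define \<beta> where "\<beta> t = \<gamma> t - b" for t
    have b0: "\<beta> 0 = q" unfolding \<beta>_def ge(2) qab by simp
    have bd: "(\<beta> has_vector_derivative v) (at 0)"
      unfolding \<beta>_def using ge(4) by (auto intro!: derivative_eq_intros)
    have bD: "\<beta> t \<in> D" if "\<bar>t\<bar> < e" for t
      unfolding \<beta>_def D_def using ge(3) that M_sub_K bK by blast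
    have qw: "q \<bullet> w > 0" using zD_pos[OF w] q_def by simp
    define L where "L t = (\<beta> t \<bullet> w) / (q \<bullet> w)" for t
    have L0: "L 0 = 1" unfolding L_def b0 using qw by simp
    have Ld: "(L has_real_derivative 0) (at 0)"
    proof -
      have "((\<lambda>t. \<beta> t \<bullet> w) has_real_derivative (v \<bullet> w)) (at 0)" by (rule vd_inner[OF bd])
      then have "((\<lambda>t. (\<beta> t \<bullet> w) / (q \<bullet> w)) has_real_derivative (v \<bullet> w) / (q \<bullet> w)) (at 0)"
        by (rule DERIV_cdivide)
      then show ?thesis unfolding L_def using vw by simp
    qed
    have rq: "rho D q = 1"
      by (rule rho_frontier[OF D_convex D_compact D_int]) (use zD_frontier[OF w] q_def in simp)
    have bounds: "L t \<le> rho D (\<beta> t) \<and> rho D (\<beta> t) \<le> 1" if "\<bar>t\<bar> < e" for t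
    proof
      show "rho D (\<beta> t) \<le> 1"
        by (rule rho_le[OF D_convex D_compact D_int]) (use bD[OF that] in simp_all)
      show "L t \<le> rho D (\<beta> t)"
      proof (cases "\<beta> t = 0")
        case True then show ?thesis unfolding L_def rho_def by simp
      next
        case False
        have "\<beta> t \<bullet> w \<le> rho D (\<beta> t) * (q \<bullet> w)"
          by (rule rho_lower[OF D_convex D_compact D_int False]) (use zD_max[OF w] q_def in blast)
        then show ?thesis unfolding L_def using qw by (simp add: divide_le_eq)
      qed
    qed
    have rd: "((\<lambda>t. rho D (\<beta> t)) has_real_derivative 0) (at 0)"
      unfolding has_field_derivative_iff
    proof (rule Lim_null_comparison)
      have "((\<lambda>t. (L t - L 0) / (t - 0)) \<longlongrightarrow> 0) (at 0)"
        using Ld unfolding has_field_derivative_iff .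
      then show "((\<lambda>t. \<bar>(L t - L 0) / (t - 0)\<bar>) \<longlongrightarrow> 0) (at 0)"
        using tendsto_rabs by fastforce
      have "\<forall>\<^sub>F t in at 0. \<bar>t\<bar> < e"
        unfolding eventually_at using ge(1) by (intro exI[of _ e]) (auto simp: dist_real_def)
      then show "\<forall>\<^sub>F t in at 0. norm ((rho D (\<beta> t) - rho D (\<beta> 0)) / (t - 0)) \<le> \<bar>(L t - L 0) / (t - 0)\<bar>"
      proof (rule eventually_mono)
        fix t :: real assume t: "\<bar>t\<bar> < e"
        have "\<bar>rho D (\<beta> t) - 1\<bar> \<le> \<bar>L t - 1\<bar>" using bounds[OF t] by simp
        then show "norm ((rho D (\<beta> t) - rho D (\<beta> 0)) / (t - 0)) \<le> \<bar>(L t - L 0) / (t - 0)\<bar>"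
          using b0 rq L0 by (simp add: abs_divide divide_right_mono)
      qed
    qed
    have "v \<in> tangent_space (frontier D) q"
      by (rule gauge_curve[OF D_convex D_compact D_int _ b0 bd rd]) (use zD_frontier[OF w] q_def in simp)
    then show "v \<in> tangent_space (frontier D) (zD w)" using q_def by simp
  qed
qed

lemma reeb_D:
  assumes w: "w \<noteq> 0"
  shows "reeb J (frontier D) (zD w) = (1 / (zD w \<bullet> w)) *\<^sub>R J w"
  using zD_pos[OF w] by (intro reeb_eq[OF J tangent_D[OF w] w]) simp

definition pD where "pD w = zD w \<bullet> w"

lemma H_formula:
  assumes H_hom: "\<forall>y. \<forall>t>0. H (t *\<^sub>R y) = t * H y"
    and H_level: "{y. H y = 1} = symp_polar J (frontier D)"
    and y: "y \<noteq> 0"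
  shows "H y = pD (- J y)"
proof -
  define w where "w = - J y"
  have w: "w \<noteq> 0" unfolding w_def using J_nz y by simp
  define s where "s = pD w"
  have s: "s > 0" unfolding s_def pD_def using zD_pos[OF w] .
  have "reeb J (frontier D) (zD w) = (1 / s) *\<^sub>R y"
    using reeb_D[OF w] unfolding s_def pD_def w_def by (simp add: J_neg J_J)
  then have "(1 / s) *\<^sub>R y \<in> symp_polar J (frontier D)"
    unfolding symp_polar_def using zD_frontier[OF w] by (metis image_eqI)
  then have "H ((1 / s) *\<^sub>R y) = 1" using H_level by blast
  moreover have "H (s *\<^sub>R ((1 / s) *\<^sub>R y)) = s * H ((1 / s) *\<^sub>R y)" using H_hom s by blast
  ultimately have "H y = s" using s by simp
  then show ?thesis unfolding s_def w_def .
qed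

definition nG where "nG q = (1 / norm (grad q)) *\<^sub>R grad q"

lemma mx_cont: "w \<noteq> 0 \<Longrightarrow> isCont mx w"
proof -
  assume w0: "w \<noteq> 0"
  have Mc: "compact M" using K_compact M_bd by auto
  have cg: "continuous_on M grad" using grad_cont continuous_on_subset by blast
  have cn: "continuous_on M nG" unfolding nG_def
    using grad_nz by (intro continuous_intros cg) auto
  have nGnz: "nG q \<noteq> 0" if "q \<in> M" for q using grad_nz[OF that] unfolding nG_def by simp
  have inv: "\<forall>q\<in>M. mx (nG q) = q"
  proof
    fix q assume q: "q \<in> M"
    have "maxK (nG q) q"
      using maxK_iff[OF q nGnz[OF q]] grad_nz[OF q] unfolding nG_def by auto
    then show "mx (nG q) = q" using mx_eq nGnz[OF q] by blast
  qed
  have cmx: "continuous_on (nG ` M) mx" by (rule continuous_on_inv[OF cn Mc inv])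
  have key: "(1 / norm u) *\<^sub>R u \<in> nG ` M \<and> mx ((1 / norm u) *\<^sub>R u) = mx u" if u: "u \<noteq> 0" for u
  proof -
    define q where "q = mx u"
    have qM: "q \<in> M" using mx_M[OF u] q_def by simp
    obtain \<alpha> where al: "\<alpha> > 0" "u = \<alpha> *\<^sub>R grad q" using maxK_iff[OF qM u] mx_max[OF u] q_def by blast
    have gn: "norm (grad q) > 0" using grad_nz[OF qM] by simp
    have "(1 / norm u) *\<^sub>R u = nG q" unfolding nG_def al(2) using al(1) gn by simp
    moreover have "mx (nG q) = q" using inv qM by blast
    ultimately show ?thesis using qM q_def by auto
  qed
  have c1: "continuous_on (- {0}) (\<lambda>u. (1 / norm u) *\<^sub>R u)"
    by (intro continuous_intros) auto
  have "continuous_on (- {0}) (\<lambda>u. mx ((1 / norm u) *\<^sub>R u))"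
    by (rule continuous_on_compose2[OF cmx c1]) (use key in auto)
  then have "continuous_on (- {0}) mx"
    by (rule continuous_on_cong[THEN iffD1, rotated 2]) (use key in auto)
  then show "isCont mx w" using continuous_on_eq_continuous_at[of "- {0}" mx] w0 by auto
qed

lemma zD_cont: "w \<noteq> 0 \<Longrightarrow> isCont zD w"
proof -
  assume w: "w \<noteq> 0"
  have "isCont (\<lambda>u. mx (- u)) w"
    using isCont_o2[where f=uminus and a=w and g=mx] mx_cont[of "- w"] w by (simp add: continuous_intros)
  then show ?thesis unfolding zD_def[abs_def] using mx_cont[OF w] by (intro continuous_intros)
qed

lemma pD_der:
  assumes w: "w \<noteq> 0"
  shows "(pD has_derivative (\<lambda>h. zD w \<bullet> h)) (at w)"
  unfolding has_derivative_at
proof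
  show "bounded_linear ((\<bullet>) (zD w))" by (rule bounded_linear_inner_right)
  have cz: "((\<lambda>h. zD (w + h)) \<longlongrightarrow> zD w) (at 0)"
    using zD_cont[OF w] unfolding isCont_def by (rule LIM_offset_zero)
  have g0: "((\<lambda>h. norm (zD (w + h) - zD w)) \<longlongrightarrow> 0) (at 0)"
    using cz by (intro tendsto_norm_zero LIM_zero)
  show "((\<lambda>h. norm (pD (w + h) - pD w - zD w \<bullet> h) / norm h) \<longlongrightarrow> 0) (at 0)"
  proof (rule Lim_null_comparison[OF _ g0])
    have "\<forall>\<^sub>F h in at 0. norm h < norm w"
      unfolding eventually_at using w by (intro exI[of _ "norm w"]) (auto simp: dist_norm)
    then show "\<forall>\<^sub>F h in at 0. norm (norm (pD (w + h) - pD w - zD w \<bullet> h) / norm h) \<le> norm (zD (w + h) - zD w)"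
    proof (rule eventually_mono)
      fix h :: 'a assume h: "norm h < norm w"
      have wh: "w + h \<noteq> 0"
      proof
        assume "w + h = 0" then have "h = - w" by (simp add: add_eq_0_iff)
        then show False using h by simp
      qed
      define E where "E = pD (w + h) - pD w - zD w \<bullet> h"
      have e1: "zD w \<bullet> (w + h) \<le> zD (w + h) \<bullet> (w + h)" using zD_max[OF wh] zD_max(1)[OF w] by blast
      have e2: "zD (w + h) \<bullet> w \<le> zD w \<bullet> w" using zD_max[OF w] zD_max(1)[OF wh] by blast
      have E0: "E \<ge> 0" using e1 unfolding E_def pD_def by (simp add: inner_add_right)
      have E1: "E \<le> (zD (w + h) - zD w) \<bullet> h" using e2 unfolding E_def pD_def
        by (simp add: inner_add_right inner_diff_left)
      also have "\<dots> \<le> norm (zD (w + h) - zD w) * norm h" by (rule norm_cauchy_schwarz)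
      finally have "\<bar>E\<bar> \<le> norm (zD (w + h) - zD w) * norm h" using E0 by simp
      then show "norm (norm E / norm h) \<le> norm (zD (w + h) - zD w)"
      proof (cases "h = 0")
        case True then show ?thesis by simp
      next
        case False then show ?thesis using \<open>\<bar>E\<bar> \<le> _\<close> by (simp add: divide_le_eq)
      qed
    qed
  qed
qed

end



lemma pos_sim_scale: "t > 0 \<Longrightarrow> pos_sim a (t *\<^sub>R x) \<longleftrightarrow> pos_sim a x"
  unfolding pos_sim_def
proof
  assume t: "t > 0" and "\<exists>l>0. a = l *\<^sub>R t *\<^sub>R x"
  then obtain l where "l > 0" "a = l *\<^sub>R t *\<^sub>R x" by blast
  then show "\<exists>l>0. a = l *\<^sub>R x" using t by (intro exI[of _ "l * t"]) auto
next
  assume t: "t > 0" and "\<exists>l>0. a = l *\<^sub>R x"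
  then obtain l where "l > 0" "a = l *\<^sub>R x" by blast
  then show "\<exists>l>0. a = l *\<^sub>R t *\<^sub>R x" using t by (intro exI[of _ "l / t"]) auto
qed

theorem proposition3p1:
  fixes J :: "'a::euclidean_space \<Rightarrow> 'a"
    and M K :: "'a set"
    and F :: "'a \<Rightarrow> real" and c :: real
    and H :: "'a \<Rightarrow> real"
    and x :: 'a
  assumes J: "complex_structure J"
    and K_compact: "compact K" and K_convex: "convex K" and K_int: "0 \<in> interior K"
    and M_bd: "frontier K = M"
    and F_smooth: "smooth_fun F" and F_hess: "pos_def_hessian F"
    and M_level: "M = {y. F y = c}"
    and H_hom: "\<forall>y. \<forall>t>0. H (t *\<^sub>R y) = t * H y"
    and H_level: "{y. H y = 1} = symp_polar J (symmetrization M)"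
    and x_ext: "x \<in> exterior (symmetrization M)"
  shows "H differentiable (at x)
      \<and> 2 *\<^sub>R (n_plus J M x - n_minus J M x) = - (2 *\<^sub>R ham_field J H x)
      \<and> (\<forall>t>0. t *\<^sub>R x \<in> exterior (symmetrization M) \<longrightarrow>
            2 *\<^sub>R (n_plus J M (t *\<^sub>R x) - n_minus J M (t *\<^sub>R x))
          = 2 *\<^sub>R (n_plus J M x - n_minus J M x))"
proof -
  interpret S: setting J K M F c
    by unfold_locales (use assms in auto)
  have sym: "symmetrization M = frontier S.D"
    unfolding symmetrization_def S.hull_M S.D_def ..
  have hf: "convex hull (frontier S.D) = S.D" by (rule hull_frontier[OF S.D_compact S.D_convex])
  have ncv: "\<not> convex (frontier S.D)"
  proof
    assume "convex (frontier S.D)"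
    then have "convex hull (frontier S.D) = frontier S.D" by (rule convex_hull_eq[THEN iffD2])
    then have "frontier S.D = S.D" using hf by simp
    then have "0 \<in> frontier S.D" using S.D_int interior_subset by blast
    then show False using S.D_int by (simp add: frontier_def)
  qed
  have ext: "exterior (frontier S.D) \<subseteq> frontier S.D"
    unfolding exterior_def by (rule hull_minimal[OF order_refl]) (use ncv in \<open>simp add: fun_Compl_def\<close>)
  have x0: "x \<noteq> 0"
  proof
    assume "x = 0"
    then have "0 \<in> frontier S.D" using x_ext ext sym by auto
    then show False using S.D_int by (simp add: frontier_def)
  qed
  define w where "w = - J x"
  have w0: "w \<noteq> 0" unfolding w_def using S.J_nz x0 by simp
  have Hf: "H y = S.pD (- J y)" if "y \<in> - {0}" for y
    using S.H_formula[OF H_hom H_level[unfolded sym]] that by simp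
  have lJ: "linear (\<lambda>y. - J y)" using S.J_lin by (simp add: linear_compose_neg)
  have dJ: "((\<lambda>y. - J y) has_derivative (\<lambda>y. - J y)) (at x)"
    by (rule linear_imp_has_derivative[OF lJ])
  have "((\<lambda>y. S.pD (- J y)) has_derivative (\<lambda>u. S.zD w \<bullet> (- J u))) (at x)"
    using has_derivative_compose[OF dJ S.pD_der[OF w0[unfolded w_def]]] unfolding w_def by simp
  then have Hd: "(H has_derivative (\<lambda>u. S.zD w \<bullet> (- J u))) (at x)"
    by (rule has_derivative_transform_within_open[where s="- {0}"]) (use x0 Hf in auto)
  have diff: "H differentiable (at x)" using Hd unfolding differentiable_def by blast
  have fd: "frechet_derivative H (at x) = (\<lambda>u. S.zD w \<bullet> (- J u))"
    using frechet_derivative_at[OF Hd] by simp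
  have ham: "ham_field J H x = - S.zD w"
    unfolding ham_field_def fd
  proof (rule the_equality)
    show "\<forall>u. omega J u (- S.zD w) = S.zD w \<bullet> - J u"
      by (simp add: omega_def inner_commute)
    fix X assume X: "\<forall>u. omega J u X = S.zD w \<bullet> - J u"
    define u where "u = - J (X + S.zD w)"
    have Ju: "J u = X + S.zD w" unfolding u_def by (simp add: S.J_neg S.J_J)
    have "J u \<bullet> X = - (S.zD w \<bullet> J u)" using X[rule_format, of u] by (simp add: omega_def)
    then have "J u \<bullet> (X + S.zD w) = 0" by (simp add: inner_add_right inner_commute)
    then have "X + S.zD w = 0" unfolding Ju by simp
    then show "X = - S.zD w" by (simp add: add_eq_0_iff)
  qed
  have np: "n_plus J M x = S.mx w" using S.n_plus_eq[OF x0] w_def by simp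
  have nm: "n_minus J M x = S.mx (- w)" using S.n_minus_eq[OF x0] w_def by simp
  have main: "2 *\<^sub>R (n_plus J M x - n_minus J M x) = - (2 *\<^sub>R ham_field J H x)"
    unfolding np nm ham S.zD_def by (simp add: algebra_simps)
  have hom: "n_plus J M (t *\<^sub>R x) = n_plus J M x \<and> n_minus J M (t *\<^sub>R x) = n_minus J M x"
    if t: "t > 0" for t
  proof -
    have e1: "(\<lambda>q. q \<in> M \<and> pos_sim (reeb J M q) (t *\<^sub>R x)) = (\<lambda>q. q \<in> M \<and> pos_sim (reeb J M q) x)"
      using pos_sim_scale[OF t, of _ x] by (auto simp: fun_eq_iff)
    have e2: "(\<lambda>q. q \<in> M \<and> pos_sim (reeb J M q) (- (t *\<^sub>R x))) = (\<lambda>q. q \<in> M \<and> pos_sim (reeb J M q) (- x))"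
      using pos_sim_scale[OF t, of _ "- x"] by (auto simp: fun_eq_iff)
    show ?thesis unfolding n_plus_def n_minus_def e1 e2 by simp
  qed
  show ?thesis using diff main hom by simp
qed



end
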